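(* For every finite set of formulas $\Gamma\cup\{\varphi\}\subseteq For$: $\Gamma \vdash_{\bf Tm} \varphi$ if and only if there exists a set of formulas $\Upsilon$ such that $\Gamma\cup\{\circ' \gamma \ : \ \gamma \in \Upsilon\} \vdash_{\bf Dm} \varphi$, where $\circ'\gamma:=(\Box\gamma\to\gamma)\wedge(\Box\neg\gamma\to\neg\gamma)$.
   Context: Formulas are built from a denumerable set of propositional variables by the unary connectives $\neg$, $\Box$ and the binary connective $\to$; $For$ is the set of all formulas. Abbreviations: $\Diamond\alpha:=\neg\Box\neg\alpha$, $\alpha\vee\beta:=\neg\alpha\to\beta$, $\alpha\wedge\beta:=\neg(\alpha\to\neg\beta)$. All Hilbert calculi below have as axioms all instances (over $For$) of the axiom schemas of a standard Hilbert calculus for classical propositional logic in the signature $\{\neg,\to\}$, plus the listed modal schemas, with modus ponens as the only rule; $\Gamma\vdash_{\bf L}\alpha$ means there is a derivation of $\alpha$ from $\Gamma$ in ${\bf L}$. ${\bf Dm}$: (K) $\Box(\alpha\to\beta)\to(\Box\alpha\to\Box\beta)$; (K1) $\Box(\alpha\to\beta)\to(\Diamond\alpha\to\Diamond\beta)$; (K2) $\Diamond(\alpha\to\beta)\to(\Box\alpha\to\Diamond\beta)$; (M1) $\neg\Diamond\alpha\to\Box(\alpha\to\beta)$; (M2) $\Box\beta\to\Box(\alpha\to\beta)$; (M3) $\Diamond\beta\to\Diamond(\alpha\to\beta)$; (M4) $\Diamond\neg\alpha\to\Diamond(\alpha\to\beta)$; (DN1) $\Box\alpha\to\Box\neg\neg\alpha$;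 (DN2) $\Box\neg\neg\alpha\to\Box\alpha$; (D) $\Box\alpha\to\Diamond\alpha$. ${\bf Tm}$: the same as ${\bf Dm}$ but with (D) replaced by (T) $\Box\alpha\to\alpha$. *)

theory Defs
  imports Main
begin

datatype fm = Var nat | Neg fm | Box fm | Imp fm fm

definition Dia :: "fm \<Rightarrow> fm" where "Dia a = Neg (Box (Neg a))"
definition Disj :: "fm \<Rightarrow> fm \<Rightarrow> fm" where "Disj a b = Imp (Neg a) b"
definition Conj :: "fm \<Rightarrow> fm \<Rightarrow> fm" where "Conj a b = Neg (Imp a (Neg b))"

text \<open>Classical propositional axioms (Lukasiewicz system in the signature neg, imp).\<close>
inductive cpl_ax :: "fm \<Rightarrow> bool" where
  A1: "cpl_ax (Imp a (Imp b a))"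
| A2: "cpl_ax (Imp (Imp a (Imp b c)) (Imp (Imp a b) (Imp a c)))"
| A3: "cpl_ax (Imp (Imp (Neg a) (Neg b)) (Imp b a))"

inductive m_ax :: "fm \<Rightarrow> bool" where
  K:   "m_ax (Imp (Box (Imp a b)) (Imp (Box a) (Box b)))"
| K1:  "m_ax (Imp (Box (Imp a b)) (Imp (Dia a) (Dia b)))"
| K2:  "m_ax (Imp (Dia (Imp a b)) (Imp (Box a) (Dia b)))"
| M1:  "m_ax (Imp (Neg (Dia a)) (Box (Imp a b)))"
| M2:  "m_ax (Imp (Box b) (Box (Imp a b)))"
| M3:  "m_ax (Imp (Dia b) (Dia (Imp a b)))"
| M4:  "m_ax (Imp (Dia (Neg a)) (Dia (Imp a b)))"
| DN1: "m_ax (Imp (Box a) (Box (Neg (Neg a))))"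
| DN2: "m_ax (Imp (Box (Neg (Neg a))) (Box a))"

definition Dm_ax :: "fm \<Rightarrow> bool" where
  "Dm_ax f \<longleftrightarrow> cpl_ax f \<or> m_ax f \<or> (\<exists>a. f = Imp (Box a) (Dia a))"

definition Tm_ax :: "fm \<Rightarrow> bool" where
  "Tm_ax f \<longleftrightarrow> cpl_ax f \<or> m_ax f \<or> (\<exists>a. f = Imp (Box a) a)"

inductive derives :: "(fm \<Rightarrow> bool) \<Rightarrow> fm set \<Rightarrow> fm \<Rightarrow> bool" for Ax where
  ax:   "Ax f \<Longrightarrow> derives Ax \<Gamma> f"
| prem: "f \<in> \<Gamma> \<Longrightarrow> derives Ax \<Gamma> f"
| mp:   "derives Ax \<Gamma> (Imp a b) \<Longrightarrow> derives Ax \<Gamma> a \<Longrightarrow> derives Ax \<Gamma> b"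

abbreviation Dm_derives :: "fm set \<Rightarrow> fm \<Rightarrow> bool" where "Dm_derives \<equiv> derives Dm_ax"
abbreviation Tm_derives :: "fm set \<Rightarrow> fm \<Rightarrow> bool" where "Tm_derives \<equiv> derives Tm_ax"

definition circ' :: "fm \<Rightarrow> fm" where
  "circ' g = Conj (Imp (Box g) g) (Imp (Box (Neg g)) (Neg g))"

end

theory Submission
  imports Defs
begin

lemma d_mono: "derives Ax \<Gamma> f \<Longrightarrow> \<Gamma> \<subseteq> \<Delta> \<Longrightarrow> derives Ax \<Delta> f"
  by (induction rule: derives.induct) (auto intro: derives.intros)

context
  fixes Ax :: "fm \<Rightarrow> bool"
  assumes C: "\<And>f. cpl_ax f \<Longrightarrow> Ax f"
begin

lemma a1: "derives Ax \<Gamma> (Imp a (Imp b a))" by (rule derives.ax, rule C, rule cpl_ax.A1)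
lemma a2: "derives Ax \<Gamma> (Imp (Imp a (Imp b c)) (Imp (Imp a b) (Imp a c)))"
  by (rule derives.ax, rule C, rule cpl_ax.A2)
lemma a3: "derives Ax \<Gamma> (Imp (Imp (Neg a) (Neg b)) (Imp b a))"
  by (rule derives.ax, rule C, rule cpl_ax.A3)

lemma ident: "derives Ax \<Gamma> (Imp a a)"
  by (meson a1 a2 derives.mp)

lemma deduct: "derives Ax (insert a \<Gamma>) b \<Longrightarrow> derives Ax \<Gamma> (Imp a b)"
proof (induction "insert a \<Gamma>" b rule: derives.induct)
  case (ax f)
  then show ?case by (meson a1 derives.ax derives.mp)
next
  case (prem f)
  then show ?case by (metis a1 derives.mp derives.prem ident insertE)
next
  case (mp x b)
  then show ?case by (meson a2 derives.mp)
qed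

lemma mp': "derives Ax \<Gamma> (Imp a b) \<Longrightarrow> derives Ax (insert a \<Gamma>) b"
  by (meson derives.mp derives.prem d_mono insertI1 subset_insertI)

lemma efq: "derives Ax \<Gamma> (Neg a) \<Longrightarrow> derives Ax \<Gamma> a \<Longrightarrow> derives Ax \<Gamma> b"
  by (meson a1 a3 derives.mp)

lemma dne: "derives Ax \<Gamma> (Neg (Neg a)) \<Longrightarrow> derives Ax \<Gamma> a"
  by (meson a1 a3 derives.mp)

lemma dni: "derives Ax \<Gamma> a \<Longrightarrow> derives Ax \<Gamma> (Neg (Neg a))"
proof -
  assume h: "derives Ax \<Gamma> a"
  have "derives Ax \<Gamma> (Imp (Neg (Neg (Neg a))) (Neg a))"
    by (rule deduct, rule dne, rule derives.prem, simp)
  then show ?thesis by (meson a3 derives.mp h)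
qed

lemma conjE1: "derives Ax \<Gamma> (Conj a b) \<Longrightarrow> derives Ax \<Gamma> a"
proof -
  assume h: "derives Ax \<Gamma> (Conj a b)"
  have "derives Ax \<Gamma> (Imp (Neg a) (Neg (Neg (Imp a (Neg b)))))"
    apply (rule deduct, rule dni, rule deduct)
    apply (rule efq[of _ a]) by (auto intro: derives.prem)
  then show ?thesis using h unfolding Conj_def by (meson a3 derives.mp)
qed

lemma conjI': "derives Ax \<Gamma> a \<Longrightarrow> derives Ax \<Gamma> b \<Longrightarrow> derives Ax \<Gamma> (Conj a b)"
proof -
  assume ha: "derives Ax \<Gamma> a" and hb: "derives Ax \<Gamma> b"
  have "derives Ax \<Gamma> (Imp (Neg (Neg (Imp a (Neg b)))) (Neg b))"
    apply (rule deduct)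
    apply (rule derives.mp[of _ _ a])
     apply (rule dne, rule derives.prem, simp)
    using ha d_mono by blast
  then show ?thesis using hb unfolding Conj_def by (meson a3 derives.mp)
qed

end

lemma cplT: "cpl_ax f \<Longrightarrow> Tm_ax f" by (simp add: Tm_ax_def)
lemma cplD: "cpl_ax f \<Longrightarrow> Dm_ax f" by (simp add: Dm_ax_def)

lemma T_deduct: "Tm_derives (insert a \<Gamma>) b \<Longrightarrow> Tm_derives \<Gamma> (Imp a b)"
  by (rule deduct) (simp_all add: Tm_ax_def)
lemma T_dne: "Tm_derives \<Gamma> (Neg (Neg a)) \<Longrightarrow> Tm_derives \<Gamma> a"
  by (rule dne) (simp_all add: Tm_ax_def)
lemma T_a3: "Tm_derives \<Gamma> (Imp (Imp (Neg a) (Neg b)) (Imp b a))"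
  by (rule a3) (simp_all add: Tm_ax_def)
lemma T_conjI: "Tm_derives \<Gamma> a \<Longrightarrow> Tm_derives \<Gamma> b \<Longrightarrow> Tm_derives \<Gamma> (Conj a b)"
  by (rule conjI') (simp_all add: Tm_ax_def)
lemma D_conjE1: "Dm_derives \<Gamma> (Conj a b) \<Longrightarrow> Dm_derives \<Gamma> a"
  by (rule conjE1) (simp_all add: Dm_ax_def)

lemma Tm_T: "Tm_derives \<Gamma> (Imp (Box a) a)"
  by (rule derives.ax) (auto simp: Tm_ax_def)

lemma Tm_D: "Tm_derives \<Gamma> (Imp (Box a) (Dia a))"
proof -
  have "Tm_derives (insert (Box a) \<Gamma>) (Imp (Neg (Neg (Box (Neg a)))) (Neg a))"
    apply (rule T_deduct)
    apply (rule derives.mp[OF Tm_T])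
    apply (rule T_dne, rule derives.prem, simp)
    done
  moreover have "Tm_derives (insert (Box a) \<Gamma>) a"
    by (rule derives.mp[OF Tm_T], rule derives.prem, simp)
  ultimately have "Tm_derives (insert (Box a) \<Gamma>) (Neg (Box (Neg a)))"
    by (meson T_a3 derives.mp)
  then show ?thesis unfolding Dia_def by (rule T_deduct)
qed

lemma Tm_circ: "Tm_derives \<Gamma> (circ' g)"
  unfolding circ'_def by (rule T_conjI) (rule Tm_T)+

lemma fwd: "Tm_derives S \<phi> \<Longrightarrow> Dm_derives (S \<union> circ' ` UNIV) \<phi>"
proof (induction rule: derives.induct)
  case (ax f S)
  then show ?case
  proof (cases "cpl_ax f \<or> m_ax f")
    case True
    then show ?thesis by (auto intro!: derives.ax simp: Dm_ax_def)
  next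
    case False
    then obtain a where f: "f = Imp (Box a) a" using ax by (auto simp: Tm_ax_def)
    have "Dm_derives (S \<union> circ' ` UNIV) (circ' a)" by (rule derives.prem) auto
    then show ?thesis unfolding f circ'_def by (rule D_conjE1)
  qed
next
  case (prem f)
  then show ?case by (auto intro: derives.prem)
next
  case (mp a b)
  then show ?case by (meson derives.mp)
qed

lemma bwd: "Dm_derives S \<phi> \<Longrightarrow> S \<subseteq> \<Gamma> \<union> circ' ` U \<Longrightarrow> Tm_derives \<Gamma> \<phi>"
proof (induction rule: derives.induct)
  case (ax f)
  then show ?case
  proof -
    consider "cpl_ax f \<or> m_ax f" | a where "f = Imp (Box a) (Dia a)"
      using ax.hyps unfolding Dm_ax_def by blast
    then show ?thesis
    proof cases
      case 1
      then have "Tm_ax f" by (auto simp: Tm_ax_def)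
      then show ?thesis by (rule derives.ax)
    next
      case 2
      then show ?thesis using Tm_D by simp
    qed
  qed
next
  case (prem f)
  then show ?case by (auto intro: derives.prem Tm_circ)
next
  case (mp a b)
  then show ?case by (meson derives.mp)
qed

theorem mainTheorem8:
  fixes \<Gamma> :: "fm set" and \<phi> :: fm
  assumes "finite \<Gamma>"
  shows "Tm_derives \<Gamma> \<phi> \<longleftrightarrow> (\<exists>\<Upsilon>. Dm_derives (\<Gamma> \<union> circ' ` \<Upsilon>) \<phi>)"
  using fwd bwd by blast

end
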